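(* Let $X$ be a Banach space such that $B_{X^*}$ is weak$^*$ sequentially compact. If $X$ contains a $\mathfrak{D}$-point, or if $X^*$ contains a weak$^*$ $\Delta$-point, then $X^*$ contains a weak$^*$ sequential super $\Delta$-point.
   Context: For $x\in S_X$ let $D(x)=\{x^*\in S_{X^*}:x^*(x)=1\}$ and $S(x^*,\varepsilon)=\{y\in B_X:x^*(y)>1-\varepsilon\}$. A point $x\in S_X$ is a $\mathfrak{D}$-point if $\sup_{y\in S(x^*,\varepsilon)}\|x-y\|=2$ for every $x^*\in D(x)$ and $\varepsilon>0$. A point $x^*\in S_{X^*}$ is a weak$^*$ $\Delta$-point if $\sup_{y^*\in S}\|x^*-y^*\|=2$ for every weak$^*$ slice $S=\{y^*\in B_{X^*}:y^*(x)>1-\varepsilon\}$ ($x\in S_X$, $\varepsilon>0$) containing $x^*$. A point $x^*\in S_{X^*}$ is a weak$^*$ sequential super $\Delta$-point if there is a sequence $(x_n^* )$ in $S_{X^*}$ converging weak$^*$ to $x^*$ with $\|x^*-x_n^*\|\to2$. *)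

theory Defs
  imports "HOL-Analysis.Analysis"
begin

text \<open>The dual X* of a real Banach space X (type 'a::banach) is represented by the
  bounded linear functionals 'a \<Rightarrow> real, with the operator norm onorm.\<close>

definition dual_ball :: "('a::real_normed_vector \<Rightarrow> real) set" where
  "dual_ball = {f. bounded_linear f \<and> onorm f \<le> 1}"

definition dual_sphere :: "('a::real_normed_vector \<Rightarrow> real) set" where
  "dual_sphere = {f. bounded_linear f \<and> onorm f = 1}"

definition weak_star_tendsto ::
  "(nat \<Rightarrow> 'a::real_normed_vector \<Rightarrow> real) \<Rightarrow> ('a \<Rightarrow> real) \<Rightarrow> bool" where
  "weak_star_tendsto g f \<longleftrightarrow> (\<forall>x. (\<lambda>n. g n x) \<longlonglongrightarrow> f x)"

definition dual_ball_weak_star_seq_compact :: "'a::real_normed_vector itself \<Rightarrow> bool" where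
  "dual_ball_weak_star_seq_compact _ \<longleftrightarrow>
     (\<forall>g::nat \<Rightarrow> 'a \<Rightarrow> real. (\<forall>n. g n \<in> dual_ball) \<longrightarrow>
        (\<exists>r f. strict_mono r \<and> f \<in> dual_ball \<and> weak_star_tendsto (g \<circ> r) f))"

definition Dset :: "'a::real_normed_vector \<Rightarrow> ('a \<Rightarrow> real) set" where
  "Dset x = {f \<in> dual_sphere. f x = 1}"

definition slice :: "('a::real_normed_vector \<Rightarrow> real) \<Rightarrow> real \<Rightarrow> 'a set" where
  "slice f \<epsilon> = {y. norm y \<le> 1 \<and> f y > 1 - \<epsilon>}"

definition D_point :: "'a::real_normed_vector \<Rightarrow> bool" where
  "D_point x \<longleftrightarrow> norm x = 1 \<and>
     (\<forall>f \<in> Dset x. \<forall>\<epsilon>>0. (SUP y \<in> slice f \<epsilon>. norm (x - y)) = 2)"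

definition weak_star_slice :: "'a::real_normed_vector \<Rightarrow> real \<Rightarrow> ('a \<Rightarrow> real) set" where
  "weak_star_slice x \<epsilon> = {g \<in> dual_ball. g x > 1 - \<epsilon>}"

definition weak_star_Delta_point :: "('a::real_normed_vector \<Rightarrow> real) \<Rightarrow> bool" where
  "weak_star_Delta_point f \<longleftrightarrow> f \<in> dual_sphere \<and>
     (\<forall>x \<epsilon>. norm x = 1 \<and> \<epsilon> > 0 \<and> f \<in> weak_star_slice x \<epsilon> \<longrightarrow>
        (SUP g \<in> weak_star_slice x \<epsilon>. onorm (\<lambda>z. f z - g z)) = 2)"

definition weak_star_seq_super_Delta_point :: "('a::real_normed_vector \<Rightarrow> real) \<Rightarrow> bool" where
  "weak_star_seq_super_Delta_point f \<longleftrightarrow> f \<in> dual_sphere \<and>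
     (\<exists>g. (\<forall>n. g n \<in> dual_sphere) \<and> weak_star_tendsto g f \<and>
          (\<lambda>n. onorm (\<lambda>z. f z - g n z)) \<longlonglongrightarrow> 2)"

end

theory Submission
  imports Defs
begin


definition HBset :: "'a::real_normed_vector \<Rightarrow> ('a \<times> real) set set" where
 "HBset v = {G. (\<forall>a b c d. (a,b) \<in> G \<longrightarrow> (c,d) \<in> G \<longrightarrow> (a+c, b+d) \<in> G) \<and>
     (\<forall>a b r. (a,b) \<in> G \<longrightarrow> (r *\<^sub>R a, r*b) \<in> G) \<and> (v, norm v) \<in> G \<and>
     (\<forall>a b. (a,b)\<in>G \<longrightarrow> b \<le> norm a)}"

lemma HB_base:
  fixes v :: "'a::real_normed_vector"
  shows "range (\<lambda>t. (t *\<^sub>R v, t * norm v)) \<in> HBset v"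
  unfolding HBset_def
proof (intro CollectI conjI allI impI)
  fix a b c d assume A: "(a, b) \<in> range (\<lambda>t. (t *\<^sub>R v, t * norm v))" "(c, d) \<in> range (\<lambda>t. (t *\<^sub>R v, t * norm v))"
  from A(1) obtain t where t: "(a,b) = (t *\<^sub>R v, t * norm v)" by (rule rangeE)
  from A(2) obtain s where s: "(c,d) = (s *\<^sub>R v, s * norm v)" by (rule rangeE)
  show "(a + c, b + d) \<in> range (\<lambda>t. (t *\<^sub>R v, t * norm v))"
  proof (rule image_eqI[where x="t+s"])
    show "(a + c, b + d) = ((t+s) *\<^sub>R v, (t+s) * norm v)"
      using t s by (simp add: scaleR_add_left distrib_right)
  qed simp
next
  fix a b r assume "(a, b) \<in> range (\<lambda>t. (t *\<^sub>R v, t * norm v))"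
  then obtain t where t: "(a,b) = (t *\<^sub>R v, t * norm v)" by (rule rangeE)
  show "(r *\<^sub>R a, r * b) \<in> range (\<lambda>t. (t *\<^sub>R v, t * norm v))"
  proof (rule image_eqI[where x="r*t"])
    show "(r *\<^sub>R a, r * b) = ((r*t) *\<^sub>R v, (r*t) * norm v)"
      using t by simp
  qed simp
next
  show "(v, norm v) \<in> range (\<lambda>t. (t *\<^sub>R v, t * norm v))"
    by (rule image_eqI[where x=1]) simp_all
next
  fix a b assume "(a, b) \<in> range (\<lambda>t. (t *\<^sub>R v, t * norm v))"
  then obtain t where t: "(a,b) = (t *\<^sub>R v, t * norm v)" by (rule rangeE)
  have "t * norm v \<le> \<bar>t\<bar> * norm v" by (intro mult_right_mono) auto
  then show "b \<le> norm a" using t by simp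
qed

lemma HB_chain_bound:
  fixes v :: "'a::real_normed_vector"
  assumes C: "C \<in> chains (HBset v)"
  shows "\<exists>U\<in>HBset v. \<forall>X\<in>C. X \<subseteq> U"
proof (cases "C = {}")
  case True
  have "\<forall>X\<in>C. X \<subseteq> range (\<lambda>t. (t *\<^sub>R v, t * norm v))" using True by simp
  then show ?thesis using HB_base[of v] by blast
next
  case False
  have sub: "C \<subseteq> HBset v" using C unfolding chains_def by simp
  have ch: "X \<subseteq> Y \<or> Y \<subseteq> X" if "X \<in> C" "Y \<in> C" for X Y
    using C that unfolding chains_def chain_subset_def by blast
  have mem: "\<And>X. X \<in> C \<Longrightarrow> X \<in> HBset v" using sub by blast
  have "\<Union>C \<in> HBset v"
    unfolding HBset_def
  proof (intro CollectI conjI allI impI)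
    fix a b c d assume "(a,b) \<in> \<Union>C" "(c,d) \<in> \<Union>C"
    then obtain X Y where XY: "X \<in> C" "Y \<in> C" "(a,b) \<in> X" "(c,d) \<in> Y" by blast
    have cX: "(a+c, b+d) \<in> X" if "(a,b) \<in> X" "(c,d) \<in> X"
      using mem[OF XY(1)] that unfolding HBset_def by blast
    have cY: "(a+c, b+d) \<in> Y" if "(a,b) \<in> Y" "(c,d) \<in> Y"
      using mem[OF XY(2)] that unfolding HBset_def by blast
    from ch[OF XY(1,2)] show "(a+c, b+d) \<in> \<Union>C"
    proof
      assume "X \<subseteq> Y"
      then have "(a+c,b+d) \<in> Y" using cY XY by blast
      then show ?thesis using XY by blast
    next
      assume "Y \<subseteq> X"
      then have "(a+c,b+d) \<in> X" using cX XY by blast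
      then show ?thesis using XY by blast
    qed
  next
    fix a b r assume "(a,b) \<in> \<Union>C"
    then obtain X where X: "X \<in> C" "(a,b) \<in> X" by blast
    then have "(r *\<^sub>R a, r*b) \<in> X" using mem[OF X(1)] unfolding HBset_def by blast
    then show "(r *\<^sub>R a, r*b) \<in> \<Union>C" using X by blast
  next
    obtain X where X: "X \<in> C" using False by blast
    then have "(v, norm v) \<in> X" using mem[OF X] unfolding HBset_def by blast
    then show "(v, norm v) \<in> \<Union>C" using X by blast
  next
    fix a b assume "(a,b) \<in> \<Union>C"
    then obtain X where X: "X \<in> C" "(a,b) \<in> X" by blast
    then show "b \<le> norm a" using mem[OF X(1)] unfolding HBset_def by blast
  qed
  then show ?thesis by blast
qed

lemma HB_unique:
  assumes "G \<in> HBset v" "(a,b) \<in> G" "(a,c) \<in> G"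
  shows "b = c"
proof -
  have cl1: "\<And>a b c d. (a,b) \<in> G \<Longrightarrow> (c,d) \<in> G \<Longrightarrow> (a+c, b+d) \<in> G"
   and cl2: "\<And>a b r. (a,b) \<in> G \<Longrightarrow> (r *\<^sub>R a, r*b) \<in> G"
   and dom: "\<And>a b. (a,b)\<in>G \<Longrightarrow> b \<le> norm a"
    using assms(1) unfolding HBset_def by blast+
  have "((-1) *\<^sub>R a, (-1)*c) \<in> G" by (rule cl2[OF assms(3)])
  from cl1[OF assms(2) this] have "(0, b - c) \<in> G" by simp
  then have 1: "b - c \<le> 0" using dom by fastforce
  have "((-1) *\<^sub>R a, (-1)*b) \<in> G" by (rule cl2[OF assms(2)])
  from cl1[OF assms(3) this] have "(0, c - b) \<in> G" by simp
  then have 2: "c - b \<le> 0" using dom by fastforce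
  from 1 2 show ?thesis by simp
qed

lemma HB_total:
  fixes v :: "'a::real_normed_vector"
  assumes M: "M \<in> HBset v" and max: "\<forall>X\<in>HBset v. M \<subseteq> X \<longrightarrow> X = M"
  shows "\<exists>b. (z,b) \<in> M"
proof (rule ccontr)
  assume nz: "\<not> (\<exists>b. (z,b) \<in> M)"
  have cl1: "\<And>a b c d. (a,b) \<in> M \<Longrightarrow> (c,d) \<in> M \<Longrightarrow> (a+c, b+d) \<in> M"
   and cl2: "\<And>a b r. (a,b) \<in> M \<Longrightarrow> (r *\<^sub>R a, r*b) \<in> M"
   and vM: "(v, norm v) \<in> M"
   and dom: "\<And>a b. (a,b)\<in>M \<Longrightarrow> b \<le> norm a"
    using M unfolding HBset_def by blast+
  have zero: "(0,0) \<in> M" using cl2[OF vM, of 0] by simp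
  have key: "b - norm (a - z) \<le> norm (a' + z) - b'" if "(a,b) \<in> M" "(a',b') \<in> M" for a b a' b'
  proof -
    have "b + b' \<le> norm (a + a')" using dom[OF cl1[OF that]] .
    also have "\<dots> = norm ((a - z) + (a' + z))" by simp
    also have "\<dots> \<le> norm (a - z) + norm (a' + z)" by (rule norm_triangle_ineq)
    finally show ?thesis by simp
  qed
  define S where "S = {b - norm (a - z) | a b. (a,b) \<in> M}"
  define c where "c = Sup S"
  have Sne: "S \<noteq> {}" using zero unfolding S_def by blast
  have Sle: "s \<le> norm (0 + z) - 0" if "s \<in> S" for s
  proof -
    from that obtain a b where "s = b - norm (a - z)" "(a,b) \<in> M" by (auto simp: S_def)
    with key[OF this(2) zero] show ?thesis by simp
  qed
  have Sbdd: "bdd_above S" by (rule bdd_aboveI[OF Sle])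
  have c1: "b - norm (a - z) \<le> c" if "(a,b) \<in> M" for a b
  proof -
    have "b - norm (a - z) \<in> S" using that unfolding S_def by blast
    then show ?thesis unfolding c_def by (rule cSup_upper[OF _ Sbdd])
  qed
  have c2: "c \<le> norm (a + z) - b" if "(a,b) \<in> M" for a b
    unfolding c_def
  proof (rule cSup_least[OF Sne])
    fix s assume "s \<in> S"
    then obtain a' b' where "s = b' - norm (a' - z)" "(a',b') \<in> M" by (auto simp: S_def)
    with key[OF this(2) that] show "s \<le> norm (a + z) - b" by simp
  qed
  define M' where "M' = {(a + t *\<^sub>R z, b + t * c) | a b t. (a,b) \<in> M}"
  have domM': "b + t * c \<le> norm (a + t *\<^sub>R z)" if ab: "(a,b) \<in> M" for a b t
  proof (cases "t = 0")
    case True then show ?thesis using dom[OF ab] by simp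
  next
    case False
    show ?thesis
    proof (cases "t > 0")
      case True
      have "((1/t) *\<^sub>R a, (1/t)*b) \<in> M" by (rule cl2[OF ab])
      from c2[OF this] have "t * c \<le> t * (norm ((1/t) *\<^sub>R a + z) - (1/t)*b)"
        using True by (simp add: mult_left_mono)
      also have "\<dots> = norm (t *\<^sub>R ((1/t) *\<^sub>R a + z)) - b"
        using True by (simp add: right_diff_distrib)
      also have "t *\<^sub>R ((1/t) *\<^sub>R a + z) = a + t *\<^sub>R z"
        using True by (simp add: scaleR_add_right)
      finally show ?thesis by simp
    next
      case False2: False
      define s where "s = - t"
      have s: "s > 0" using False False2 s_def by simp
      have "((1/s) *\<^sub>R a, (1/s)*b) \<in> M" by (rule cl2[OF ab])
      from c1[OF this] have A: "s * ((1/s)*b - norm ((1/s) *\<^sub>R a - z)) \<le> s * c"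
        using s by (simp add: mult_left_mono)
      have B: "s * ((1/s)*b - norm ((1/s) *\<^sub>R a - z)) = b - norm (s *\<^sub>R ((1/s) *\<^sub>R a - z))"
        using s by (simp add: right_diff_distrib)
      have C: "s *\<^sub>R ((1/s) *\<^sub>R a - z) = a + t *\<^sub>R z"
        using s s_def by (simp add: scaleR_diff_right)
      from A B have "b - norm (s *\<^sub>R ((1/s) *\<^sub>R a - z)) \<le> s * c" by linarith
      then have "b - norm (a + t *\<^sub>R z) \<le> s * c" by (simp only: C)
      then show ?thesis using s_def by (simp add: algebra_simps)
    qed
  qed
  have M'H: "M' \<in> HBset v"
    unfolding HBset_def
  proof (intro CollectI conjI allI impI)
    fix a b a' b' assume "(a,b) \<in> M'" "(a',b') \<in> M'"
    then obtain a1 b1 t1 a2 b2 t2 where "(a1,b1) \<in> M" "(a2,b2) \<in> M"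
      "a = a1 + t1 *\<^sub>R z" "b = b1 + t1 * c" "a' = a2 + t2 *\<^sub>R z" "b' = b2 + t2 * c"
      unfolding M'_def by blast
    then have e: "(a + a', b + b') = ((a1+a2) + (t1+t2) *\<^sub>R z, (b1+b2) + (t1+t2)*c)"
      by (simp add: algebra_simps scaleR_add_left)
    have m: "(a1+a2, b1+b2) \<in> M" by (rule cl1) fact+
    show "(a + a', b + b') \<in> M'" unfolding M'_def using e m by blast
  next
    fix a b r assume "(a,b) \<in> M'"
    then obtain a1 b1 t1 where "(a1,b1) \<in> M" "a = a1 + t1 *\<^sub>R z" "b = b1 + t1 * c"
      unfolding M'_def by blast
    then have e: "(r *\<^sub>R a, r*b) = (r *\<^sub>R a1 + (r*t1) *\<^sub>R z, r*b1 + (r*t1)*c)"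
      by (simp add: scaleR_add_right algebra_simps)
    have m: "(r *\<^sub>R a1, r*b1) \<in> M" by (rule cl2) fact
    show "(r *\<^sub>R a, r * b) \<in> M'"
      unfolding M'_def using e m by blast
  next
    have "(v, norm v) = (v + 0 *\<^sub>R z, norm v + 0 * c)" by simp
    then show "(v, norm v) \<in> M'" unfolding M'_def using vM by blast
  next
    fix a b assume "(a,b) \<in> M'"
    then obtain a1 b1 t1 where "(a1,b1) \<in> M" "a = a1 + t1 *\<^sub>R z" "b = b1 + t1 * c"
      unfolding M'_def by blast
    then show "b \<le> norm a" using domM' by simp
  qed
  have MM: "M \<subseteq> M'"
  proof
    fix p assume "p \<in> M"
    moreover obtain a b where "p = (a,b)" by (cases p)
    moreover have "(a,b) = (a + 0 *\<^sub>R z, b + 0 * c)" by simp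
    ultimately show "p \<in> M'" unfolding M'_def by blast
  qed
  have zc: "(z, c) \<in> M'"
  proof -
    have "(z, c) = (0 + 1 *\<^sub>R z, 0 + 1 * c)" by simp
    then show ?thesis unfolding M'_def using zero by blast
  qed
  have "M' = M" using max M'H MM by blast
  with zc have "(z, c) \<in> M" by simp
  with nz show False by blast
qed

lemma hahn_banach_norming:
  fixes v :: "'a::real_normed_vector"
  assumes "v \<noteq> 0"
  shows "\<exists>f. bounded_linear f \<and> onorm f = 1 \<and> f v = norm v"
proof -
  obtain M where M: "M \<in> HBset v" and max: "\<forall>X\<in>HBset v. M \<subseteq> X \<longrightarrow> X = M"
    using Zorn_Lemma2[OF ballI[OF HB_chain_bound]] by blast
  have cl1: "\<And>a b c d. (a,b) \<in> M \<Longrightarrow> (c,d) \<in> M \<Longrightarrow> (a+c, b+d) \<in> M"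
   and cl2: "\<And>a b r. (a,b) \<in> M \<Longrightarrow> (r *\<^sub>R a, r*b) \<in> M"
   and vM: "(v, norm v) \<in> M"
   and dom: "\<And>a b. (a,b)\<in>M \<Longrightarrow> b \<le> norm a"
    using M unfolding HBset_def by blast+
  define f where "f a = (SOME b. (a,b) \<in> M)" for a
  have fM: "(a, f a) \<in> M" for a
    unfolding f_def using HB_total[OF M max, of a] by (metis someI_ex)
  have fu: "f a = b" if "(a,b) \<in> M" for a b
    using HB_unique[OF M fM that] .
  have add: "f (a + c) = f a + f c" for a c by (rule fu[OF cl1[OF fM fM]])
  have sc: "f (r *\<^sub>R a) = r *\<^sub>R f a" for r a using fu[OF cl2[OF fM]] by simp
  have bd: "norm (f a) \<le> norm a * 1" for a
  proof -
    have "f a \<le> norm a" using dom[OF fM] .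
    moreover have "f ((-1) *\<^sub>R a) \<le> norm ((-1) *\<^sub>R a)" using dom[OF fM] .
    then have "- f a \<le> norm a" using sc[of "-1" a] by simp
    ultimately show ?thesis by simp
  qed
  have bl: "bounded_linear f" by (rule bounded_linear_intro[OF add sc bd])
  have fv: "f v = norm v" by (rule fu[OF vM])
  have "onorm f \<le> 1" by (rule onorm_bound) (use bd in auto)
  moreover have "norm v \<le> onorm f * norm v" using onorm[OF bl, of v] fv by simp
  then have "1 \<le> onorm f" using assms by simp
  ultimately show ?thesis using bl fv by auto
qed



lemma dual_compact:
  fixes x :: "'a::real_normed_vector"
  shows "compact {g::'a\<Rightarrow>real. (\<forall>a b. g (a+b) = g a + g b) \<and> (\<forall>r a. g (r *\<^sub>R a) = r * g a)
     \<and> (\<forall>a. \<bar>g a\<bar> \<le> norm a) \<and> 1 \<le> g x}" (is "compact ?K")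
proof -
  define P where "P = PiE UNIV (\<lambda>a::'a. cball (0::real) (norm a))"
  have "compactin (product_topology (\<lambda>_. euclidean) UNIV) P"
    unfolding P_def by (subst compactin_PiE) auto
  then have cP: "compact P" by (simp add: euclidean_product_topology)
  have cl: "closed {g::'a\<Rightarrow>real. (\<forall>a b. g (a+b) = g a + g b) \<and> (\<forall>r a. g (r *\<^sub>R a) = r * g a)
     \<and> (\<forall>a. \<bar>g a\<bar> \<le> norm a) \<and> 1 \<le> g x}"
    by (intro closed_Collect_conj closed_Collect_all closed_Collect_eq closed_Collect_le
        continuous_intros continuous_on_product_coordinates)
  have "?K = P \<inter> ?K" unfolding P_def by (auto simp: PiE_def)
  with compact_Int_closed[OF cP cl] show ?thesis by simp
qed



lemma bl_of_ball: "g \<in> dual_ball \<Longrightarrow> bounded_linear g"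
  by (simp add: dual_ball_def)

lemma ball_abs: assumes "g \<in> dual_ball" shows "\<bar>g z\<bar> \<le> norm z"
proof -
  have "bounded_linear g" "onorm g \<le> 1" using assms by (auto simp: dual_ball_def)
  then have "norm (g z) \<le> onorm g * norm z" by (intro onorm)
  also have "\<dots> \<le> 1 * norm z" using \<open>onorm g \<le> 1\<close> by (intro mult_right_mono) auto
  finally show ?thesis by simp
qed

lemma ball_abs1: "g \<in> dual_ball \<Longrightarrow> norm z \<le> 1 \<Longrightarrow> \<bar>g z\<bar> \<le> 1"
  using ball_abs[of g z] by linarith

lemma sphere_ball: "f \<in> dual_sphere \<Longrightarrow> f \<in> dual_ball"
  by (simp add: dual_sphere_def dual_ball_def)

lemma onorm_ge:
  fixes h :: "'a::real_normed_vector \<Rightarrow> real"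
  assumes "bounded_linear h" "norm z \<le> 1"
  shows "h z \<le> onorm h"
proof -
  have "h z \<le> norm (h z)" by simp
  also have "\<dots> \<le> onorm h * norm z" by (rule onorm[OF assms(1)])
  also have "\<dots> \<le> onorm h * 1" using assms onorm_pos_le[OF assms(1)] by (intro mult_left_mono) auto
  finally show ?thesis by simp
qed

lemma onorm_witness:
  fixes h :: "'a::real_normed_vector \<Rightarrow> real"
  assumes bl: "bounded_linear h" and c: "c < onorm h"
  shows "\<exists>z. norm z \<le> 1 \<and> c < h z"
proof (rule ccontr)
  assume "\<not> ?thesis"
  then have H: "\<And>z. norm z \<le> 1 \<Longrightarrow> h z \<le> c" by (meson not_le)
  interpret h: bounded_linear h by fact
  have c0: "0 \<le> c" using H[of 0] by simp
  have "norm (h x) \<le> c * norm x" for x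
  proof (cases "x = 0")
    case True then show ?thesis by simp
  next
    case False
    define y where "y = x /\<^sub>R norm x"
    have ny: "norm y = 1" "norm (-y) = 1" using False by (auto simp: y_def)
    have "h y \<le> c" "h (-y) \<le> c" using H ny by auto
    then have "\<bar>h y\<bar> \<le> c" using h.neg[of y] by auto
    moreover have "h x = norm x * h y" using False by (simp add: y_def h.scaleR)
    moreover have "norm x * \<bar>h y\<bar> \<le> norm x * c"
      using \<open>\<bar>h y\<bar> \<le> c\<close> by (intro mult_left_mono) auto
    ultimately show ?thesis by (simp add: abs_mult mult.commute)
  qed
  then have "onorm h \<le> c" by (intro onorm_bound c0)
  with c show False by simp
qed

lemma diff_le2:
  assumes "f \<in> dual_ball" "g \<in> dual_ball"
  shows "onorm (\<lambda>z. f z - g z) \<le> 2"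
proof (rule onorm_bound)
  fix z
  have "\<bar>f z - g z\<bar> \<le> \<bar>f z\<bar> + \<bar>g z\<bar>" by simp
  also have "\<dots> \<le> norm z + norm z" using ball_abs[OF assms(1)] ball_abs[OF assms(2)] by (intro add_mono)
  finally show "norm (f z - g z) \<le> 2 * norm z" by simp
qed simp

lemma wsD_witness:
  assumes D: "weak_star_Delta_point f" and u: "norm u = 1" and e: "\<epsilon> > 0" "f u > 1 - \<epsilon>"
    and d: "\<delta> > 0"
  shows "\<exists>g z. g \<in> dual_ball \<and> g u > 1 - \<epsilon> \<and> norm z \<le> 1 \<and> f z > 1 - \<delta> \<and> g z < -1 + \<delta>"
proof -
  have fs: "f \<in> dual_sphere" using D by (simp add: weak_star_Delta_point_def)
  have fb: "f \<in> dual_ball" by (rule sphere_ball[OF fs])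
  have fS: "f \<in> weak_star_slice u \<epsilon>" using fb e by (simp add: weak_star_slice_def)
  have SUP: "(SUP g \<in> weak_star_slice u \<epsilon>. onorm (\<lambda>z. f z - g z)) = 2"
    using D u e fS by (simp add: weak_star_Delta_point_def)
  have bdd: "bdd_above ((\<lambda>g. onorm (\<lambda>z. f z - g z)) ` weak_star_slice u \<epsilon>)"
    using diff_le2[OF fb] by (auto simp: bdd_above_def weak_star_slice_def)
  have "2 - \<delta> < (SUP g \<in> weak_star_slice u \<epsilon>. onorm (\<lambda>z. f z - g z))" using SUP d by simp
  then obtain g where g: "g \<in> weak_star_slice u \<epsilon>" "2 - \<delta> < onorm (\<lambda>z. f z - g z)"
    using less_cSUP_iff[OF _ bdd] fS by blast
  have gb: "g \<in> dual_ball" and gu: "g u > 1 - \<epsilon>" using g(1) by (auto simp: weak_star_slice_def)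
  have "bounded_linear (\<lambda>z. f z - g z)"
    using fb gb by (intro bounded_linear_sub) (auto simp: dual_ball_def)
  from onorm_witness[OF this g(2)] obtain z where z: "norm z \<le> 1" "2 - \<delta> < f z - g z" by blast
  have "\<bar>f z\<bar> \<le> 1" "\<bar>g z\<bar> \<le> 1" using ball_abs1 fb gb z(1) by auto
  then show ?thesis using gb gu z by (intro exI[of _ g] exI[of _ z]) auto
qed

lemma sum_pow2: "(\<Sum>j<n. (2::real)^j) = 2^n - 1"
  by (induction n) auto



lemma case2:
  fixes f :: "'a::real_normed_vector \<Rightarrow> real"
  assumes comp: "dual_ball_weak_star_seq_compact TYPE('a)"
    and D: "weak_star_Delta_point f"
  shows "\<exists>h::'a\<Rightarrow>real. weak_star_seq_super_Delta_point h"
proof -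
  have fs: "f \<in> dual_sphere" using D by (simp add: weak_star_Delta_point_def)
  have fb: "f \<in> dual_ball" by (rule sphere_ball[OF fs])
  have flin: "bounded_linear f" and fn: "onorm f = 1" using fs by (auto simp: dual_sphere_def)
  interpret f: bounded_linear f by (rule flin)
  have fabs: "\<bar>f w\<bar> \<le> norm w" for w by (rule ball_abs[OF fb])
  obtain e0 where e0: "norm e0 \<le> 1" "f e0 > 1/2"
    using onorm_witness[OF flin, of "1/2"] fn by auto
  define dd :: "nat \<Rightarrow> real" where "dd n = (1/4)^n / 8" for n
  have dd_pos: "dd n > 0" for n by (simp add: dd_def)
  define spec where "spec n w p \<longleftrightarrow> fst p \<in> dual_ball \<and>
      fst p (w /\<^sub>R norm w) > f (w /\<^sub>R norm w) - (1/4)^n \<and> norm (snd p) \<le> 1 \<and>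
      f (snd p) > 1 - dd n \<and> fst p (snd p) < -1 + dd n" for n w and p :: "('a\<Rightarrow>real) \<times> 'a"
  define CH where "CH n w = (SOME p. spec n w p)" for n w
  have CHex: "spec n w (CH n w)" if "norm w \<noteq> 0" for n w
  proof -
    define u where "u = w /\<^sub>R norm w"
    have nu: "norm u = 1" using that by (simp add: u_def)
    have "\<bar>f u\<bar> \<le> 1" using fabs[of u] nu by simp
    then have ep: "1 - f u + (1/4)^n > 0" by (simp add: add_nonneg_pos)
    obtain g z where gz: "g \<in> dual_ball" "g u > 1 - (1 - f u + (1/4)^n)" "norm z \<le> 1"
      "f z > 1 - dd n" "g z < -1 + dd n"
      using wsD_witness[OF D nu ep _ dd_pos, of n] by auto
    have "spec n w (g, z)" using gz by (simp add: spec_def u_def)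
    then show ?thesis unfolding CH_def by (rule someI)
  qed
  define W where "W = rec_nat e0 (\<lambda>n w. w + (2^n) *\<^sub>R snd (CH n w))"
  have W0: "W 0 = e0" and WS: "W (Suc n) = W n + (2^n) *\<^sub>R snd (CH n (W n))" for n
    by (simp_all add: W_def)
  define zs where "zs n = snd (CH n (W n))" for n
  define gs where "gs n = fst (CH n (W n))" for n
  have inv: "f (W n) \<ge> 2^n - 3/4 + (1/2)^n/4 \<and> norm (W n) \<le> 2^n" for n
  proof (induction n)
    case 0 then show ?case using e0 by (simp add: W0)
  next
    case (Suc n)
    have "(1::real) \<le> 2^n" "0 \<le> (1/2::real)^n" by simp_all
    then have "f (W n) > 0" using Suc by linarith
    then have "norm (W n) \<noteq> 0" using fabs[of "W n"] by auto
    from CHex[OF this, of n] have sp: "norm (zs n) \<le> 1" "f (zs n) > 1 - dd n"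
      by (auto simp: spec_def zs_def)
    have fW: "f (W (Suc n)) = f (W n) + 2^n * f (zs n)"
      by (simp add: WS zs_def f.add f.scaleR)
    have e1: "(2::real)^n * (1/4)^n = (1/2)^n" by (simp add: power_mult_distrib[symmetric])
    have "(2::real)^n * f (zs n) \<ge> 2^n * (1 - dd n)" using sp(2) by (intro mult_left_mono) auto
    also have "2^n * (1 - dd n) = 2^n - (1/2)^n / 8" using e1 by (simp add: dd_def algebra_simps)
    finally have A: "(2::real)^n * f (zs n) \<ge> 2^n - (1/2)^n / 8" .
    have B: "norm (W (Suc n)) \<le> norm (W n) + 2^n * norm (zs n)"
      using norm_triangle_ineq[of "W n" "(2^n) *\<^sub>R zs n"] by (simp add: WS zs_def)
    have "2^n * norm (zs n) \<le> (2::real)^n * 1" using sp(1) by (intro mult_left_mono) auto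
    with B Suc have "norm (W (Suc n)) \<le> 2^n + 2^n" by linarith
    then have "norm (W (Suc n)) \<le> 2^Suc n" by simp
    moreover have "f (W (Suc n)) \<ge> 2^Suc n - 3/4 + (1/2)^Suc n / 4"
      using fW A Suc by simp
    ultimately show ?case by simp
  qed
  have Wne: "norm (W n) \<noteq> 0" for n
  proof -
    have "(1::real) \<le> 2^n" "0 \<le> (1/2::real)^n" by simp_all
    then have "f (W n) > 0" using inv[of n] by linarith
    then show ?thesis using fabs[of "W n"] by auto
  qed
  have sp: "gs n \<in> dual_ball" "gs n (W n /\<^sub>R norm (W n)) > f (W n /\<^sub>R norm (W n)) - (1/4)^n"
    "norm (zs n) \<le> 1" "f (zs n) > 1 - dd n" "gs n (zs n) < -1 + dd n" for n
    using CHex[OF Wne[of n], of n] by (auto simp: spec_def zs_def gs_def)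
  have Wsum: "W n = e0 + (\<Sum>j<n. (2^j) *\<^sub>R zs j)" for n
    by (induction n) (simp_all add: W0 WS zs_def)
  have rowbound: "gs n (zs i) \<ge> 1 - 2 * (1/2)^i" if "i < n" for i n
  proof -
    define g where "g = gs n"
    have gb: "g \<in> dual_ball" using sp(1) by (simp add: g_def)
    have gl: "bounded_linear g" using gb by (rule bl_of_ball)
    interpret g: bounded_linear g by (rule gl)
    define w where "w = W n"
    have wpos: "norm w > 0" using Wne[of n] by (simp add: w_def)
    have "g (w /\<^sub>R norm w) > f (w /\<^sub>R norm w) - (1/4)^n" using sp(2)[of n] by (simp add: g_def w_def)
    moreover have "g (w /\<^sub>R norm w) = inverse (norm w) * g w" by (simp add: g.scaleR)
    moreover have "f (w /\<^sub>R norm w) = inverse (norm w) * f w" by (simp add: f.scaleR)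
    ultimately have "inverse (norm w) * f w - (1/4)^n < inverse (norm w) * g w" by simp
    then have "norm w * (inverse (norm w) * f w - (1/4)^n) < norm w * (inverse (norm w) * g w)"
      using wpos by (rule mult_strict_left_mono)
    moreover have "norm w * (inverse (norm w) * g w) = g w" using wpos by simp
    moreover have "norm w * (inverse (norm w) * f w - (1/4)^n) = f w - (1/4)^n * norm w"
      using wpos by (simp add: right_diff_distrib mult.commute)
    ultimately have "g w > f w - (1/4)^n * norm w" by simp
    moreover have "(1/4)^n * norm w \<le> (1/4::real)^n * 2^n" using inv[of n] by (intro mult_left_mono) (auto simp: w_def)
    moreover have "(1/4::real)^n * 2^n = (1/2)^n" by (simp add: power_mult_distrib[symmetric])
    moreover have "(1/2::real)^n \<le> 1" by (simp add: power_le_one)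
    moreover have "f w \<ge> 2^n - 3/4"
    proof -
      have "0 \<le> (1/2::real)^n" by simp
      then show ?thesis using inv[of n] unfolding w_def by linarith
    qed
    ultimately have low: "g w > 2^n - 7/4" by linarith
    have gw: "g w = g e0 + (\<Sum>j<n. 2^j * g (zs j))"
      by (simp add: w_def Wsum g.add g.sum g.scaleR)
    have ge0: "g e0 \<le> 1" using ball_abs1[OF gb e0(1)] by simp
    have fin: "finite {..<n}" by simp
    have iin: "i \<in> {..<n}" using that by simp
    have "(\<Sum>j<n. 2^j * g (zs j)) = 2^i * g (zs i) + (\<Sum>j\<in>{..<n}-{i}. 2^j * g (zs j))"
      by (rule sum.remove[OF fin iin])
    also have "(\<Sum>j\<in>{..<n}-{i}. 2^j * g (zs j)) \<le> (\<Sum>j\<in>{..<n}-{i}. (2::real)^j)"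
    proof (rule sum_mono)
      fix j have "g (zs j) \<le> 1" using ball_abs1[OF gb sp(3)[of j]] by simp
      then show "2^j * g (zs j) \<le> (2::real)^j" by (simp add: mult_left_le)
    qed
    also have "(\<Sum>j\<in>{..<n}-{i}. (2::real)^j) = (\<Sum>j<n. (2::real)^j) - 2^i"
      using sum.remove[OF fin iin, of "\<lambda>j. (2::real)^j"] by simp
    also have "\<dots> = 2^n - 1 - 2^i" by (simp add: sum_pow2)
    finally have "g w \<le> 1 + 2^i * g (zs i) + 2^n - 1 - 2^i" using gw ge0 by linarith
    moreover have "(2::real)^i * (1 - g (zs i)) = 2^i - 2^i * g (zs i)" by (simp add: right_diff_distrib)
    ultimately have "2^i * (1 - g (zs i)) < 7/4" using low by linarith
    then have A: "(1/2)^i * (2^i * (1 - g (zs i))) \<le> (1/2)^i * (7/4)" by (intro mult_left_mono) auto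
    have "(1/2::real)^i * 2^i = 1" by (simp add: power_mult_distrib[symmetric])
    then have "(1/2)^i * (2^i * (1 - g (zs i))) = 1 - g (zs i)" by (simp add: mult.assoc[symmetric])
    with A have B: "1 - g (zs i) \<le> (1/2)^i * (7/4)" by simp
    have "(1/2::real)^i * (7/4) \<le> 2 * (1/2)^i" by simp
    with B have "1 - 2 * (1/2)^i \<le> g (zs i)" by linarith
    then show ?thesis by (simp add: g_def)
  qed

  obtain r H where r: "strict_mono r" and Hb: "H \<in> dual_ball" and Hlim: "weak_star_tendsto (gs \<circ> r) H"
    using comp sp(1) unfolding dual_ball_weak_star_seq_compact_def by blast
  have Hl: "bounded_linear H" using Hb by (rule bl_of_ball)
  have Hz: "H (zs i) \<ge> 1 - 2 * (1/2)^i" for i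
  proof (rule LIMSEQ_le_const)
    show "(\<lambda>n. gs (r n) (zs i)) \<longlonglongrightarrow> H (zs i)" using Hlim by (simp add: weak_star_tendsto_def o_def)
    show "\<exists>N. \<forall>n\<ge>N. 1 - 2 * (1/2)^i \<le> gs (r n) (zs i)"
    proof (intro exI[of _ "Suc i"] allI impI)
      fix n assume "Suc i \<le> n"
      then have "i < r n" using seq_suble[OF r, of n] by simp
      then show "1 - 2 * (1/2)^i \<le> gs (r n) (zs i)" by (rule rowbound)
    qed
  qed
  have Hn1: "onorm H = 1"
  proof (rule ccontr)
    assume ne: "onorm H \<noteq> 1"
    have "onorm H \<le> 1" using Hb by (simp add: dual_ball_def)
    with ne have d: "1 - onorm H > 0" by simp
    obtain i where i: "(1/2::real)^i < (1 - onorm H)/2"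
      using real_arch_pow_inv[of "(1 - onorm H)/2" "1/2"] d by auto
    have "H (zs i) \<le> onorm H" by (rule onorm_ge[OF Hl sp(3)])
    moreover have "2 * (1/2::real)^i < 1 - onorm H"
    proof -
      have "2 * (1/2::real)^i < 2 * ((1 - onorm H)/2)" using i by (intro mult_strict_left_mono) auto
      then show ?thesis by simp
    qed
    ultimately show False using Hz[of i] by linarith
  qed
  have Hs: "H \<in> dual_sphere" using Hl Hn1 by (simp add: dual_sphere_def)
  define c where "c m = onorm (gs m)" for m
  have gl: "bounded_linear (gs m)" for m by (rule bl_of_ball[OF sp(1)])
  have c_le: "c m \<le> 1" for m using sp(1)[of m] by (simp add: c_def dual_ball_def)
  have c_ge: "c m > 1 - dd m" for m
  proof -
    have "- gs m (zs m) = gs m (- zs m)" using linear_neg[OF bounded_linear.linear[OF gl]] by simp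
    also have "\<dots> \<le> c m" unfolding c_def by (rule onorm_ge[OF gl]) (use sp(3)[of m] in simp)
    finally show ?thesis using sp(5)[of m] by simp
  qed
  have dd_small: "dd m \<le> 1/8" for m
  proof -
    have "(1/4::real)^m \<le> 1" by (simp add: power_le_one)
    then show ?thesis by (simp add: dd_def)
  qed
  have c_pos: "c m > 0" for m using c_ge[of m] dd_small[of m] by linarith
  define k where "k n = (\<lambda>x. gs (r n) x / c (r n))" for n
  have k_eq: "k n = (\<lambda>x. (1 / c (r n)) *\<^sub>R gs (r n) x)" for n
    by (simp add: k_def fun_eq_iff)
  have kl: "bounded_linear (k n)" for n
    unfolding k_eq by (rule bounded_linear_compose[OF bounded_linear_scaleR_right gl])
  have kn: "onorm (k n) = 1" for n
  proof -
    have "onorm (\<lambda>x. (1 / c (r n)) *\<^sub>R gs (r n) x) = \<bar>1 / c (r n)\<bar> * onorm (gs (r n))"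
      by (rule onorm_scaleR[OF gl])
    also have "\<dots> = 1" using c_pos[of "r n"] by (simp add: c_def)
    finally show ?thesis unfolding k_eq .
  qed
  have ks: "k n \<in> dual_sphere" for n using kl kn by (simp add: dual_sphere_def)
  have kb: "k n \<in> dual_ball" for n by (rule sphere_ball[OF ks])
  have dd0: "dd \<longlonglongrightarrow> 0"
    unfolding dd_def by (intro tendsto_eq_intros LIMSEQ_power_zero) auto
  have ddr: "(\<lambda>n. dd (r n)) \<longlonglongrightarrow> 0" using LIMSEQ_subseq_LIMSEQ[OF dd0 r] by (simp add: o_def)
  have cr: "(\<lambda>n. c (r n)) \<longlonglongrightarrow> 1"
  proof (rule tendsto_sandwich[of "\<lambda>n. 1 - dd (r n)" _ _ "\<lambda>n. 1"])
    show "\<forall>\<^sub>F n in sequentially. 1 - dd (r n) \<le> c (r n)"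
      by (intro always_eventually allI less_imp_le c_ge)
    show "\<forall>\<^sub>F n in sequentially. c (r n) \<le> 1" by (intro always_eventually allI c_le)
    show "(\<lambda>n. 1 - dd (r n)) \<longlonglongrightarrow> 1" using tendsto_diff[OF tendsto_const ddr, of 1] by simp
  qed simp
  have kw: "weak_star_tendsto k H"
    unfolding weak_star_tendsto_def
  proof
    fix x
    have "(\<lambda>n. gs (r n) x) \<longlonglongrightarrow> H x" using Hlim by (simp add: weak_star_tendsto_def o_def)
    from tendsto_divide[OF this cr] show "(\<lambda>n. k n x) \<longlonglongrightarrow> H x" by (simp add: k_def)
  qed
  define dst where "dst n = onorm (\<lambda>z. H z - k n z)" for n
  have up: "dst n \<le> 2" for n unfolding dst_def by (rule diff_le2[OF Hb kb])
  have lowb: "dst n \<ge> 2 - 2 * (1/2)^(r n) - dd (r n)" for n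
  proof -
    define m where "m = r n"
    have "k n (zs m) = gs m (zs m) / c m" by (simp add: k_def m_def)
    also have "\<dots> \<le> -1 + dd m"
    proof -
      have neg: "-1 + dd m < 0" using dd_small[of m] by simp
      have "gs m (zs m) \<le> -1 + dd m" using sp(5)[of m] by simp
      also have "-1 + dd m \<le> c m * (-1 + dd m)"
        using neg c_le[of m] c_pos[of m] by (simp add: mult_le_cancel_right2)
      finally show ?thesis using c_pos[of m] by (simp add: divide_le_eq mult.commute)
    qed
    finally have kz: "k n (zs m) \<le> -1 + dd m" .
    have "H (zs m) - k n (zs m) \<le> dst n"
      unfolding dst_def by (rule onorm_ge[OF bounded_linear_sub[OF Hl kl] sp(3)])
    with kz Hz[of m] show ?thesis by (simp add: m_def)
  qed
  have lowlim: "(\<lambda>n. 2 - 2 * (1/2)^(r n) - dd (r n)) \<longlonglongrightarrow> 2"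
  proof -
    have p0: "(\<lambda>m. (1/2::real)^m) \<longlonglongrightarrow> 0" by (intro LIMSEQ_power_zero) simp
    have "(\<lambda>n. (1/2::real)^(r n)) \<longlonglongrightarrow> 0" using LIMSEQ_subseq_LIMSEQ[OF p0 r] by (simp add: o_def)
    from tendsto_diff[OF tendsto_diff[OF tendsto_const tendsto_mult[OF tendsto_const this]] ddr]
    show ?thesis by simp
  qed
  have "dst \<longlonglongrightarrow> 2"
    by (rule tendsto_sandwich[OF _ _ lowlim tendsto_const]) (intro always_eventually allI lowb up)+
  moreover have deq: "dst = (\<lambda>n. onorm (\<lambda>z. H z - k n z))" by (rule ext) (simp add: dst_def)
  ultimately have "(\<lambda>n. onorm (\<lambda>z. H z - k n z)) \<longlonglongrightarrow> 2" by simp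
  then have "weak_star_seq_super_Delta_point H"
    unfolding weak_star_seq_super_Delta_point_def using Hs ks kw by blast
  then show ?thesis by blast
qed



lemma K_to_D:
  fixes x :: "'a::real_normed_vector"
  assumes nx: "norm x = 1"
    and g: "g \<in> {g::'a\<Rightarrow>real. (\<forall>a b. g (a+b) = g a + g b) \<and> (\<forall>r a. g (r *\<^sub>R a) = r * g a)
     \<and> (\<forall>a. \<bar>g a\<bar> \<le> norm a) \<and> 1 \<le> g x}"
  shows "g \<in> Dset x"
proof -
  have add: "g (a+b) = g a + g b" and sc: "g (r *\<^sub>R a) = r * g a" and bd: "\<bar>g a\<bar> \<le> norm a"
    and gx: "1 \<le> g x" for a b r using g by auto
  have bl: "bounded_linear g"
  proof (rule bounded_linear_intro[where K=1])
    show "g (a + b) = g a + g b" for a b by (rule add)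
    show "g (r *\<^sub>R a) = r *\<^sub>R g a" for r a using sc[of r a] by simp
    show "norm (g a) \<le> norm a * 1" for a using bd[of a] by simp
  qed
  have le: "onorm g \<le> 1" by (rule onorm_bound) (use bd in auto)
  have "g x \<le> onorm g" by (rule onorm_ge[OF bl]) (simp add: nx)
  with gx le have "onorm g = 1" by simp
  moreover have "g x = 1" using bd[of x] gx nx by simp
  ultimately show ?thesis using bl by (simp add: Dset_def dual_sphere_def)
qed

lemma D_to_K:
  fixes x :: "'a::real_normed_vector"
  assumes "g \<in> Dset x"
  shows "g \<in> {g::'a\<Rightarrow>real. (\<forall>a b. g (a+b) = g a + g b) \<and> (\<forall>r a. g (r *\<^sub>R a) = r * g a)
     \<and> (\<forall>a. \<bar>g a\<bar> \<le> norm a) \<and> 1 \<le> g x}"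
proof -
  have gs: "g \<in> dual_sphere" and gx: "g x = 1" using assms by (auto simp: Dset_def)
  have gb: "g \<in> dual_ball" by (rule sphere_ball[OF gs])
  interpret g: bounded_linear g using gs by (simp add: dual_sphere_def)
  show ?thesis using ball_abs[OF gb] gx by (auto simp: g.add g.scaleR)
qed

lemma ball_to_K:
  fixes x :: "'a::real_normed_vector"
  assumes "g \<in> dual_ball" "1 \<le> g x"
  shows "g \<in> {g::'a\<Rightarrow>real. (\<forall>a b. g (a+b) = g a + g b) \<and> (\<forall>r a. g (r *\<^sub>R a) = r * g a)
     \<and> (\<forall>a. \<bar>g a\<bar> \<le> norm a) \<and> 1 \<le> g x}"
proof -
  interpret g: bounded_linear g using assms by (simp add: dual_ball_def)
  show ?thesis using ball_abs[OF assms(1)] assms(2) by (auto simp: g.add g.scaleR)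
qed

lemma nonDelta_data:
  fixes f :: "'a::real_normed_vector \<Rightarrow> real"
  assumes fs: "f \<in> dual_sphere" and nD: "\<not> weak_star_Delta_point f"
  shows "\<exists>u \<epsilon> \<eta>. norm u = 1 \<and> \<epsilon> > 0 \<and> f u > 1 - \<epsilon> \<and> \<eta> > 0 \<and>
     (\<forall>g \<in> weak_star_slice u \<epsilon>. onorm (\<lambda>z. f z - g z) \<le> 2 - \<eta>)"
proof -
  have fb: "f \<in> dual_ball" by (rule sphere_ball[OF fs])
  obtain u \<epsilon> where u: "norm u = 1" "\<epsilon> > 0" "f \<in> weak_star_slice u \<epsilon>"
    and ne: "(SUP g \<in> weak_star_slice u \<epsilon>. onorm (\<lambda>z. f z - g z)) \<noteq> 2"
    using nD fs unfolding weak_star_Delta_point_def by blast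
  define S where "S = (SUP g \<in> weak_star_slice u \<epsilon>. onorm (\<lambda>z. f z - g z))"
  have bdd: "bdd_above ((\<lambda>g. onorm (\<lambda>z. f z - g z)) ` weak_star_slice u \<epsilon>)"
    using diff_le2[OF fb] by (auto simp: bdd_above_def weak_star_slice_def)
  have "S \<le> 2" unfolding S_def
  proof (rule cSUP_least)
    show "weak_star_slice u \<epsilon> \<noteq> {}" using u(3) by blast
  next
    fix g assume "g \<in> weak_star_slice u \<epsilon>"
    then have "g \<in> dual_ball" by (simp add: weak_star_slice_def)
    then show "onorm (\<lambda>z. f z - g z) \<le> 2" by (rule diff_le2[OF fb])
  qed
  with ne have S2: "S < 2" by (simp add: S_def)
  have up: "\<forall>g \<in> weak_star_slice u \<epsilon>. onorm (\<lambda>z. f z - g z) \<le> 2 - (2 - S)"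
  proof
    fix g assume "g \<in> weak_star_slice u \<epsilon>"
    from cSUP_upper[OF this bdd] show "onorm (\<lambda>z. f z - g z) \<le> 2 - (2 - S)" by (simp add: S_def)
  qed
  have fu: "f u > 1 - \<epsilon>" using u(3) by (simp add: weak_star_slice_def)
  have "0 < 2 - S" using S2 by simp
  with u(1,2) fu up show ?thesis by blast
qed

lemma case1:
  fixes x :: "'a::real_normed_vector"
  assumes comp: "dual_ball_weak_star_seq_compact TYPE('a)"
    and Dp: "D_point x"
  shows "\<exists>f::'a\<Rightarrow>real. weak_star_Delta_point f"
proof (rule ccontr)
  assume nD: "\<not> ?thesis"
  have nx: "norm x = 1" and Dx: "\<And>f \<epsilon>. f \<in> Dset x \<Longrightarrow> \<epsilon> > 0 \<Longrightarrow> (SUP y \<in> slice f \<epsilon>. norm (x - y)) = 2"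
    using Dp by (auto simp: D_point_def)
  define K where "K = {g::'a\<Rightarrow>real. (\<forall>a b. g (a+b) = g a + g b) \<and> (\<forall>r a. g (r *\<^sub>R a) = r * g a)
     \<and> (\<forall>a. \<bar>g a\<bar> \<le> norm a) \<and> 1 \<le> g x}"
  have cK: "compact K" unfolding K_def by (rule dual_compact)
  define Q where "Q f p \<longleftrightarrow> norm (fst p) = 1 \<and> fst (snd p) > 0 \<and> f (fst p) > 1 - fst (snd p) \<and> snd (snd p) > 0 \<and>
     (\<forall>g \<in> weak_star_slice (fst p) (fst (snd p)). onorm (\<lambda>z. f z - g z) \<le> 2 - snd (snd p))"
    for f :: "'a \<Rightarrow> real" and p :: "'a \<times> real \<times> real"
  have Qex: "\<exists>p. Q f p" if "f \<in> Dset x" for f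
  proof -
    from that have "f \<in> dual_sphere" by (simp add: Dset_def)
    from nonDelta_data[OF this] nD obtain u \<epsilon> \<eta> where "norm u = 1 \<and> \<epsilon> > 0 \<and> f u > 1 - \<epsilon> \<and> \<eta> > 0 \<and>
     (\<forall>g \<in> weak_star_slice u \<epsilon>. onorm (\<lambda>z. f z - g z) \<le> 2 - \<eta>)" by blast
    then have "Q f (u, \<epsilon>, \<eta>)" by (simp add: Q_def)
    then show ?thesis by blast
  qed
  define P where "P f = (SOME p. Q f p)" for f
  have P: "Q f (P f)" if "f \<in> Dset x" for f
    unfolding P_def using Qex[OF that] by (rule someI_ex)
  define U where "U f = fst (P f)" for f
  define E where "E f = fst (snd (P f))" for f
  define N where "N f = snd (snd (P f))" for f
  have PU: "norm (U f) = 1" "E f > 0" "f (U f) > 1 - E f" "N f > 0"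
    "\<And>g. g \<in> weak_star_slice (U f) (E f) \<Longrightarrow> onorm (\<lambda>z. f z - g z) \<le> 2 - N f"
    if "f \<in> Dset x" for f using P[OF that] by (auto simp: Q_def U_def E_def N_def)
  define Ov where "Ov f = {g::'a\<Rightarrow>real. 1 - E f < g (U f)}" for f
  have opn: "open (Ov f)" for f
    unfolding Ov_def by (intro open_Collect_less continuous_intros continuous_on_product_coordinates)
  have cov: "K \<subseteq> (\<Union>f\<in>Dset x. Ov f)"
  proof
    fix g assume "g \<in> K"
    then have "g \<in> Dset x" using K_to_D[OF nx] by (simp add: K_def)
    then show "g \<in> (\<Union>f\<in>Dset x. Ov f)" using PU(3) by (auto simp: Ov_def)
  qed
  obtain F where F: "F \<subseteq> Dset x" "finite F" "K \<subseteq> (\<Union>f\<in>F. Ov f)"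
    using compactE_image[OF cK opn cov] by blast
  have "x \<noteq> 0" using nx by auto
  from hahn_banach_norming[OF this] obtain f0 where f0: "bounded_linear f0" "onorm f0 = 1" "f0 x = norm x"
    by blast
  have "f0 \<in> Dset x" using f0 nx by (simp add: Dset_def dual_sphere_def)
  then have "f0 \<in> K" using D_to_K by (simp add: K_def)
  then have Fne: "F \<noteq> {}" using F(3) by blast
  have "\<exists>d0>0. \<forall>g\<in>dual_ball. g x > 1 - d0 \<longrightarrow> (\<exists>f\<in>F. g \<in> Ov f)"
  proof (rule ccontr)
    assume "\<not> ?thesis"
    then have nd: "\<And>d0. d0 > 0 \<Longrightarrow> \<exists>g. g \<in> dual_ball \<and> g x > 1 - d0 \<and> \<not> (\<exists>f\<in>F. g \<in> Ov f)"
      by blast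
    define G where "G n = (SOME g. g \<in> dual_ball \<and> g x > 1 - inverse (real (Suc n)) \<and> \<not> (\<exists>f\<in>F. g \<in> Ov f))" for n
    have "G n \<in> dual_ball \<and> G n x > 1 - inverse (real (Suc n)) \<and> \<not> (\<exists>f\<in>F. G n \<in> Ov f)" for n
    proof -
      have "\<exists>g. g \<in> dual_ball \<and> g x > 1 - inverse (real (Suc n)) \<and> \<not> (\<exists>f\<in>F. g \<in> Ov f)"
        using nd[of "inverse (real (Suc n))"] by simp
      then show ?thesis unfolding G_def by (rule someI_ex)
    qed
    then have G: "\<And>n. G n \<in> dual_ball" "\<And>n. G n x > 1 - inverse (real (Suc n))"
      "\<And>n. \<not> (\<exists>f\<in>F. G n \<in> Ov f)" by auto
    obtain r H where r: "strict_mono r" and Hb: "H \<in> dual_ball" and Hlim: "weak_star_tendsto (G \<circ> r) H"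
      using comp G(1) unfolding dual_ball_weak_star_seq_compact_def by blast
    have lim: "(\<lambda>n. G (r n) y) \<longlonglongrightarrow> H y" for y using Hlim by (simp add: weak_star_tendsto_def o_def)
    have i0: "(\<lambda>n. inverse (real (Suc n))) \<longlonglongrightarrow> 0" by (rule LIMSEQ_inverse_real_of_nat)
    have "(\<lambda>n. inverse (real (Suc (r n)))) \<longlonglongrightarrow> 0" using LIMSEQ_subseq_LIMSEQ[OF i0 r] by (simp add: o_def)
    then have l1: "(\<lambda>n. 1 - inverse (real (Suc (r n)))) \<longlonglongrightarrow> 1"
      using tendsto_diff[OF tendsto_const, of _ 0 sequentially 1] by simp
    have "1 \<le> H x"
      by (rule LIMSEQ_le[OF l1 lim]) (intro exI[of _ 0] allI impI less_imp_le G(2))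
    then have "H \<in> K" using ball_to_K[OF Hb] by (simp add: K_def)
    then obtain f where f: "f \<in> F" "1 - E f < H (U f)" using F(3) by (auto simp: Ov_def)
    have "eventually (\<lambda>n. 1 - E f < G (r n) (U f)) sequentially"
      by (rule order_tendstoD(1)[OF lim f(2)])
    then obtain N where "\<forall>n\<ge>N. 1 - E f < G (r n) (U f)" unfolding eventually_sequentially by blast
    then have "1 - E f < G (r N) (U f)" by blast
    then have "G (r N) \<in> Ov f" by (simp add: Ov_def)
    with G(3) f(1) show False by blast
  qed
  then obtain d0 where d0: "d0 > 0" "\<And>g. g \<in> dual_ball \<Longrightarrow> g x > 1 - d0 \<Longrightarrow> \<exists>f\<in>F. g \<in> Ov f" by blast
  define n where "n = card F"
  have npos: "n > 0" using F(2) Fne by (simp add: n_def card_gt_0_iff)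
  define \<phi> where "\<phi> a = (\<Sum>f\<in>F. f a) / real n" for a
  have Fs: "f \<in> dual_sphere" "f x = 1" if "f \<in> F" for f using F(1) that by (auto simp: Dset_def)
  have Fb: "f \<in> dual_ball" if "f \<in> F" for f using sphere_ball Fs that by blast
  have "\<phi> \<in> K"
    unfolding K_def
  proof (intro CollectI conjI allI)
    fix a b
    have "f (a+b) = f a + f b" if "f \<in> F" for f
    proof -
      interpret f: bounded_linear f using Fs(1)[OF that] by (simp add: dual_sphere_def)
      show ?thesis by (rule f.add)
    qed
    then have "(\<Sum>f\<in>F. f (a+b)) = (\<Sum>f\<in>F. f a + f b)" by (intro sum.cong) auto
    then show "\<phi> (a+b) = \<phi> a + \<phi> b" by (simp add: \<phi>_def sum.distrib add_divide_distrib)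
  next
    fix r a
    have "f (r *\<^sub>R a) = r * f a" if "f \<in> F" for f
    proof -
      interpret f: bounded_linear f using Fs(1)[OF that] by (simp add: dual_sphere_def)
      show ?thesis by (simp add: f.scaleR)
    qed
    then have "(\<Sum>f\<in>F. f (r *\<^sub>R a)) = (\<Sum>f\<in>F. r * f a)" by (intro sum.cong) auto
    then show "\<phi> (r *\<^sub>R a) = r * \<phi> a" by (simp add: \<phi>_def sum_distrib_left)
  next
    fix a
    have "\<bar>\<Sum>f\<in>F. f a\<bar> \<le> (\<Sum>f\<in>F. \<bar>f a\<bar>)" by (rule sum_abs)
    also have "\<dots> \<le> (\<Sum>f\<in>F. norm a)" by (rule sum_mono) (use ball_abs Fb in blast)
    also have "\<dots> = real n * norm a" by (simp add: n_def)
    finally show "\<bar>\<phi> a\<bar> \<le> norm a" using npos by (simp add: \<phi>_def divide_le_eq mult.commute)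
  next
    have "(\<Sum>f\<in>F. f x) = (\<Sum>f\<in>F. 1)" by (rule sum.cong) (auto simp: Fs(2))
    then show "1 \<le> \<phi> x" using npos by (simp add: \<phi>_def n_def)
  qed
  then have \<phi>D: "\<phi> \<in> Dset x" using K_to_D[OF nx] by (simp add: K_def)
  define \<eta> where "\<eta> = Min (N ` F)"
  have \<eta>pos: "\<eta> > 0" unfolding \<eta>_def using F Fne PU(4) by (subst Min_gr_iff) auto
  have \<eta>le: "\<eta> \<le> N f" if "f \<in> F" for f unfolding \<eta>_def using F(2) that by simp
  define \<delta> where "\<delta> = min (min d0 1) (\<eta> / (real n + 1))"
  have \<delta>pos: "\<delta> > 0" using d0 \<eta>pos by (simp add: \<delta>_def)
  have \<delta>b: "\<delta> \<le> \<eta> / (real n + 1)" by (simp add: \<delta>_def)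
  have "\<delta> * (real n + 1) \<le> \<eta>"
    using \<delta>b by (subst (asm) pos_le_divide_eq) auto
  then have \<delta>1: "\<delta> \<le> d0" "\<delta> \<le> 1" "(real n + 1) * \<delta> \<le> \<eta>"
    by (simp_all add: \<delta>_def mult.commute)
  have \<phi>x: "\<phi> x = 1" using \<phi>D by (simp add: Dset_def)
  have xS: "x \<in> slice \<phi> \<delta>" using nx \<phi>x \<delta>pos by (simp add: slice_def)
  have bdd: "bdd_above ((\<lambda>y. norm (x - y)) ` slice \<phi> \<delta>)"
  proof -
    have "norm (x - y) \<le> 2" if "y \<in> slice \<phi> \<delta>" for y
      using norm_triangle_ineq4[of x y] nx that by (simp add: slice_def)
    then show ?thesis by (auto simp: bdd_above_def)
  qed
  have "2 - \<delta> < (SUP y \<in> slice \<phi> \<delta>. norm (x - y))" using Dx[OF \<phi>D \<delta>pos] \<delta>pos by simp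
  then obtain y where y: "y \<in> slice \<phi> \<delta>" "2 - \<delta> < norm (x - y)"
    using less_cSUP_iff[OF _ bdd] xS by blast
  have ny: "norm y \<le> 1" and \<phi>y: "\<phi> y > 1 - \<delta>" using y(1) by (auto simp: slice_def)
  have "norm (x - y) > 0" using y(2) \<delta>1(2) by linarith
  then have "x - y \<noteq> 0" by auto
  from hahn_banach_norming[OF this] obtain k where k: "bounded_linear k" "onorm k = 1" "k (x - y) = norm (x - y)"
    by blast
  interpret k: bounded_linear k by (rule k(1))
  have kb: "k \<in> dual_ball" using k by (simp add: dual_ball_def)
  have kxy: "k x - k y > 2 - \<delta>" using k(3) y(2) by (simp add: k.diff)
  have "\<bar>k x\<bar> \<le> 1" "\<bar>k y\<bar> \<le> 1" using ball_abs1[OF kb] nx ny by auto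
  with kxy have kx: "k x > 1 - \<delta>" and ky: "k y < -1 + \<delta>" by linarith+
  then have "k x > 1 - d0" using \<delta>1 by linarith
  from d0(2)[OF kb this] obtain j where j: "j \<in> F" "k \<in> Ov j" by blast
  have jD: "j \<in> Dset x" using F(1) j(1) by blast
  have "k \<in> weak_star_slice (U j) (E j)" using j(2) kb by (simp add: Ov_def weak_star_slice_def)
  from PU(5)[OF jD this] have upper: "onorm (\<lambda>z. j z - k z) \<le> 2 - N j" .
  have jy: "j y > 1 - real n * \<delta>"
  proof -
    have e: "\<phi> y * real n = (\<Sum>f\<in>F. f y)" using npos by (simp add: \<phi>_def)
    have "(1 - \<delta>) * real n < \<phi> y * real n" using \<phi>y npos by (intro mult_strict_right_mono) auto
    with e have "(\<Sum>f\<in>F. f y) > (1 - \<delta>) * real n" by simp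
    moreover have "(1 - \<delta>) * real n = real n - real n * \<delta>" by (simp add: algebra_simps)
    moreover have "(\<Sum>f\<in>F. f y) = j y + (\<Sum>f\<in>F-{j}. f y)" by (rule sum.remove[OF F(2) j(1)])
    moreover have "(\<Sum>f\<in>F-{j}. f y) \<le> (\<Sum>f\<in>F-{j}. 1)"
    proof (rule sum_mono)
      fix f assume "f \<in> F - {j}"
      then have "f \<in> dual_ball" using Fb by blast
      from ball_abs1[OF this ny] show "f y \<le> 1" by simp
    qed
    moreover have "(\<Sum>f\<in>F-{j}. (1::real)) = real n - 1" using F(2) j(1) npos by (simp add: n_def)
    ultimately show ?thesis by linarith
  qed
  have jl: "bounded_linear j" using Fs(1)[OF j(1)] by (simp add: dual_sphere_def)
  have A: "j y - k y \<le> onorm (\<lambda>z. j z - k z)" by (rule onorm_ge[OF bounded_linear_sub[OF jl k(1)] ny])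
  have c1: "2 - real n * \<delta> - \<delta> < j y - k y" using jy ky by linarith
  have c2: "j y - k y \<le> 2 - N j" using A upper by linarith
  have "(real n + 1) * \<delta> = real n * \<delta> + \<delta>" by (simp add: distrib_right)
  then have c3: "real n * \<delta> + \<delta> \<le> N j" using \<delta>1(3) \<eta>le[OF j(1)] by linarith
  show False using c1 c2 c3 by linarith
qed


theorem theorem5p22:
  assumes "dual_ball_weak_star_seq_compact TYPE('a::banach)"
    and "(\<exists>x::'a. D_point x) \<or> (\<exists>f::'a \<Rightarrow> real. weak_star_Delta_point f)"
  shows "\<exists>f::'a \<Rightarrow> real. weak_star_seq_super_Delta_point f"
proof -
  obtain f :: "'a \<Rightarrow> real" where "weak_star_Delta_point f"
    using assms(2) case1[OF assms(1)] by blast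
  then show ?thesis by (rule case2[OF assms(1)])
qed

end
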